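(* Let $n\ge1$ and $I,J\subseteq[n-1]$, complements taken in $[n-1]$. Then (a) $L_{\mathrm{comp}(I)}=\sum_{J\subseteq[n-1]}(-1)^{|J\setminus I|}(\nu-1)^{|I\cap J|}\Pi(\nu)_{\mathrm{comp}(J)}$; (b) $\Pi(\nu)_{\mathrm{comp}(J)}=\sum_{I\subseteq[n-1]}\frac{1}{\nu^{n-1}}(-1)^{|J\setminus I|}(\nu-1)^{|(I\cup J)^c|}L_{\mathrm{comp}(I)}$.
   Context: Fix an integer $\nu>1$; $C_\nu$ is the additive cyclic group of order $\nu$; $Q_n(\nu)=\bigoplus_{i\in[n-1]}C_\nu$. $\psi_\nu(0)=1$, $\psi_\nu(g)=-1/(\nu-1)$ for $g\ne0$. For $I\subseteq[n-1]$, $\dot\chi^I(\nu)(\mathbf g)=\prod_{i\in[n-1]\setminus I}\psi_\nu(g_i)$, and $\kappa_I(\nu)$ is the indicator function of $\{\mathbf g\in Q_n(\nu):\{i:g_i\ne0\}=I\}$. $\mathrm{scf}(\mathcal N_n(\nu))$ is the span of the $\kappa_I(\nu)$, which also has basis $\{\dot\chi^I(\nu)\}$. $\mathrm{comp}(\{s_1<\dots<s_i\})=(s_1,s_2-s_1,\dots,n-s_i)$; $L_{\mathrm{comp}(I)}=\sum_{I\subseteq J\subseteq[n-1]}M_{\mathrm{comp}(J)}$ is the fundamental quasisymmetric function ($M$ the monomial ones). $\mathrm{ch}^n_\nu:\mathrm{scf}(\mathcal N_n(\nu))\to\mathsf{QSym}_n$ is the linear isomorphism $\dot\chi^I(\nu)\mapsto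 L_{\mathrm{comp}(I)}$, and $\Pi(\nu)_{\mathrm{comp}(I)}:=\mathrm{ch}^n_\nu\big(\kappa_I(\nu)/(\nu-1)^{|I|}\big)$. *)

theory Defs
  imports Complex_Main
begin

text \<open>The group Q_n(nu): tuples indexed by [n-1] = {1..<n} with entries in C_nu = {0..<nu}
  (represented as functions nat => nat, extended by 0 outside [n-1]).\<close>
definition Qn :: "nat \<Rightarrow> nat \<Rightarrow> (nat \<Rightarrow> nat) set" where
  "Qn nu n = {g. \<forall>i. (i \<in> {1..<n} \<longrightarrow> g i < nu) \<and> (i \<notin> {1..<n} \<longrightarrow> g i = 0)}"

definition psi :: "nat \<Rightarrow> nat \<Rightarrow> real" where
  "psi nu a = (if a = 0 then 1 else - 1 / (real nu - 1))"

definition chi :: "nat \<Rightarrow> nat \<Rightarrow> nat set \<Rightarrow> (nat \<Rightarrow> nat) \<Rightarrow> real" where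
  "chi nu n I g = (\<Prod>i\<in>{1..<n} - I. psi nu (g i))"

definition kappa :: "nat \<Rightarrow> nat set \<Rightarrow> (nat \<Rightarrow> nat) \<Rightarrow> real" where
  "kappa n I g = (if {i\<in>{1..<n}. g i \<noteq> 0} = I then 1 else 0)"

text \<open>comp({s_1<...<s_i}) = (s_1, s_2-s_1, ..., n-s_i) as a list.\<close>
definition comp :: "nat \<Rightarrow> nat set \<Rightarrow> nat list" where
  "comp n I = (let s = 0 # sorted_list_of_set I @ [n]
               in map (\<lambda>k. s ! (k+1) - s ! k) [0..<card I + 1])"

text \<open>QSym_n is modelled via coordinates in the monomial basis: an element is the
  coefficient function on compositions (nat list => real); M_alpha is the indicator of alpha.\<close>
definition Mon :: "nat list \<Rightarrow> nat list \<Rightarrow> real" where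
  "Mon alpha = (\<lambda>beta. if beta = alpha then 1 else 0)"

definition Lfun :: "nat \<Rightarrow> nat set \<Rightarrow> nat list \<Rightarrow> real" where
  "Lfun n I = (\<lambda>beta. \<Sum>J | I \<subseteq> J \<and> J \<subseteq> {1..<n}. Mon (comp n J) beta)"

definition chcoef :: "nat \<Rightarrow> nat \<Rightarrow> ((nat \<Rightarrow> nat) \<Rightarrow> real) \<Rightarrow> nat set \<Rightarrow> real" where
  "chcoef nu n f = (THE c. (\<forall>I. I \<notin> Pow {1..<n} \<longrightarrow> c I = 0) \<and>
      (\<forall>g\<in>Qn nu n. f g = (\<Sum>I\<in>Pow {1..<n}. c I * chi nu n I g)))"

text \<open>ch^n_nu: chi^I |-> L_comp(I), extended linearly.\<close>
definition ch :: "nat \<Rightarrow> nat \<Rightarrow> ((nat \<Rightarrow> nat) \<Rightarrow> real) \<Rightarrow> nat list \<Rightarrow> real" where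
  "ch nu n f = (\<lambda>beta. \<Sum>I\<in>Pow {1..<n}. chcoef nu n f I * Lfun n I beta)"

definition PiF :: "nat \<Rightarrow> nat \<Rightarrow> nat set \<Rightarrow> nat list \<Rightarrow> real" where
  "PiF nu n J = ch nu n (\<lambda>g. kappa n J g / (real nu - 1) ^ card J)"

end

theory Submission
  imports Defs
begin

lemma sum_pow_prod:
  fixes F :: "nat \<Rightarrow> bool \<Rightarrow> real"
  assumes "finite A"
  shows "(\<Sum>T\<in>Pow A. \<Prod>i\<in>A. F i (i\<in>T)) = (\<Prod>i\<in>A. F i True + F i False)"
proof -
  have "(\<Prod>i\<in>A. F i True + F i False) = (\<Sum>B\<in>Pow A. (\<Prod>a\<in>B. F a True) * (\<Prod>a\<in>A - B. F a False))"
    by (rule prod_add[OF assms])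
  also have "\<dots> = (\<Sum>T\<in>Pow A. \<Prod>i\<in>A. F i (i\<in>T))"
  proof (rule sum.cong[OF refl])
    fix T assume "T \<in> Pow A"
    hence TA: "T \<subseteq> A" by auto
    have "(\<Prod>i\<in>A. F i (i\<in>T)) = (\<Prod>i\<in>A-T. F i (i\<in>T)) * (\<Prod>i\<in>T. F i (i\<in>T))"
      by (rule prod.subset_diff[OF TA assms])
    also have "\<dots> = (\<Prod>i\<in>A-T. F i False) * (\<Prod>i\<in>T. F i True)"
    proof -
      have "(\<Prod>i\<in>A-T. F i (i\<in>T)) = (\<Prod>i\<in>A-T. F i False)" by (rule prod.cong) auto
      moreover have "(\<Prod>i\<in>T. F i (i\<in>T)) = (\<Prod>i\<in>T. F i True)" by (rule prod.cong) auto
      ultimately show ?thesis by simp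
    qed
    finally show "(\<Prod>a\<in>T. F a True) * (\<Prod>a\<in>A - T. F a False) = (\<Prod>i\<in>A. F i (i\<in>T))"
      by simp
  qed
  finally show ?thesis by simp
qed

lemma pow_card_prod:
  fixes c :: real
  assumes "finite A"
  shows "c ^ card {i\<in>A. P i} = (\<Prod>i\<in>A. if P i then c else 1)"
  using prod.inter_filter[OF assms, of "\<lambda>_. c" P] by simp

lemma prod_ind:
  fixes c :: real
  assumes "finite A"
  shows "(\<Prod>i\<in>A. if P i then c else 0) = (if \<forall>i\<in>A. P i then c ^ card A else 0)"
  using assms by (induction rule: finite_induct) auto

lemma chi_prod: "chi nu n I g = (\<Prod>i\<in>{1..<n}. if i \<notin> I then psi nu (g i) else 1)"
proof -
  have "{1..<n} - I = {i\<in>{1..<n}. i \<notin> I}" by auto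
  then show ?thesis unfolding chi_def using prod.inter_filter[of "{1..<n}" "\<lambda>i. psi nu (g i)" "\<lambda>i. i \<notin> I"]
    by simp
qed

definition aa :: "real \<Rightarrow> bool \<Rightarrow> bool \<Rightarrow> real" where
  "aa q t k = (if k then 1 else if t then q else 1)"
definition mm :: "real \<Rightarrow> bool \<Rightarrow> bool \<Rightarrow> real" where
  "mm q t k = (if t then (if k then 1 else -1) else (if k then -q else 1)) / (1 - q)"

lemma mm_aa: "q \<noteq> 1 \<Longrightarrow> mm q True k * aa q True l + mm q False k * aa q False l = (if l = k then 1 else 0)"
  unfolding mm_def aa_def by (cases k; cases l) (auto simp: field_simps)

definition gT :: "nat set \<Rightarrow> nat \<Rightarrow> nat" where "gT T = (\<lambda>i. if i \<in> T then 1 else 0)"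

lemma gT_Qn: "nu > 1 \<Longrightarrow> T \<subseteq> {1..<n} \<Longrightarrow> gT T \<in> Qn nu n"
  unfolding Qn_def gT_def by auto

lemma chi_gT: "chi nu n K (gT T) = (\<Prod>i\<in>{1..<n}. aa (-1 / (real nu - 1)) (i\<in>T) (i\<in>K))"
  unfolding chi_prod by (rule prod.cong) (auto simp: aa_def gT_def psi_def)

lemma coef_unique:
  assumes nu: "nu > 1" and c0: "\<forall>I. I \<notin> Pow {1..<n} \<longrightarrow> c I = 0"
    and fc: "\<forall>g\<in>Qn nu n. f g = (\<Sum>I\<in>Pow {1..<n}. c I * chi nu n I g)"
    and K: "K \<subseteq> {1..<n}"
  shows "c K = (\<Sum>T\<in>Pow {1..<n}. (\<Prod>i\<in>{1..<n}. mm (-1 / (real nu - 1)) (i\<in>T) (i\<in>K)) * f (gT T))"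
proof -
  define q where "q = -1 / (real nu - 1)"
  have q1: "q \<noteq> 1" unfolding q_def using nu by (auto simp: field_simps)
  define A where "A = {1..<(n::nat)}"
  have fA: "finite A" unfolding A_def by simp
  have inner: "(\<Sum>T\<in>Pow A. (\<Prod>i\<in>A. mm q (i\<in>T) (i\<in>K)) * chi nu n I (gT T)) = (if I = K then 1 else 0)"
    if I: "I \<subseteq> A" for I
  proof -
    have "(\<Sum>T\<in>Pow A. (\<Prod>i\<in>A. mm q (i\<in>T) (i\<in>K)) * chi nu n I (gT T))
        = (\<Sum>T\<in>Pow A. \<Prod>i\<in>A. (\<lambda>i t. mm q t (i\<in>K) * aa q t (i\<in>I)) i (i\<in>T))"
      unfolding chi_gT A_def q_def by (simp add: prod.distrib)
    also have "\<dots> = (\<Prod>i\<in>A. mm q True (i\<in>K) * aa q True (i\<in>I) + mm q False (i\<in>K) * aa q False (i\<in>I))"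
      by (rule sum_pow_prod[OF fA])
    also have "\<dots> = (\<Prod>i\<in>A. if (i\<in>I) = (i\<in>K) then 1 else 0)"
      using mm_aa[OF q1] by simp
    also have "\<dots> = (if \<forall>i\<in>A. (i\<in>I) = (i\<in>K) then 1 ^ card A else 0)"
      by (rule prod_ind[OF fA])
    also have "\<dots> = (if I = K then 1 else 0)"
      using I K unfolding A_def by auto
    finally show ?thesis .
  qed
  have "(\<Sum>T\<in>Pow A. (\<Prod>i\<in>A. mm q (i\<in>T) (i\<in>K)) * f (gT T))
      = (\<Sum>T\<in>Pow A. (\<Prod>i\<in>A. mm q (i\<in>T) (i\<in>K)) * (\<Sum>I\<in>Pow A. c I * chi nu n I (gT T)))"
    using fc gT_Qn[OF nu] unfolding A_def by (intro sum.cong) auto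
  also have "\<dots> = (\<Sum>I\<in>Pow A. c I * (\<Sum>T\<in>Pow A. (\<Prod>i\<in>A. mm q (i\<in>T) (i\<in>K)) * chi nu n I (gT T)))"
    unfolding sum_distrib_left
    by (subst sum.swap) (simp add: mult_ac)
  also have "\<dots> = (\<Sum>I\<in>Pow A. if I = K then c I else 0)"
    using inner by (intro sum.cong) auto
  also have "\<dots> = c K" using K fA unfolding A_def by simp
  finally show ?thesis unfolding A_def q_def by simp
qed

lemma chcoef_eq:
  assumes nu: "nu > 1" and c0: "\<forall>I. I \<notin> Pow {1..<n} \<longrightarrow> c I = 0"
    and fc: "\<forall>g\<in>Qn nu n. f g = (\<Sum>I\<in>Pow {1..<n}. c I * chi nu n I g)"
  shows "chcoef nu n f = c"
  unfolding chcoef_def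
proof (rule the_equality)
  show "(\<forall>I. I \<notin> Pow {1..<n} \<longrightarrow> c I = 0) \<and> (\<forall>g\<in>Qn nu n. f g = (\<Sum>I\<in>Pow {1..<n}. c I * chi nu n I g))"
    using c0 fc by blast
  fix d assume d: "(\<forall>I. I \<notin> Pow {1..<n} \<longrightarrow> d I = 0) \<and> (\<forall>g\<in>Qn nu n. f g = (\<Sum>I\<in>Pow {1..<n}. d I * chi nu n I g))"
  show "d = c"
  proof
    fix K show "d K = c K"
    proof (cases "K \<in> Pow {1..<n}")
      case True
      then show ?thesis using coef_unique[OF nu c0 fc] coef_unique[OF nu, where c=d and f=f] d by auto
    next
      case False
      then show ?thesis using c0 d by auto
    qed
  qed
qed

definition cc :: "nat \<Rightarrow> nat \<Rightarrow> nat set \<Rightarrow> nat set \<Rightarrow> real" where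
  "cc nu n J I = 1 / real nu ^ (n - 1) * (-1) ^ card (J - I) * (real nu - 1) ^ card ({1..<n} - (I \<union> J))"

lemma kappa_exp:
  assumes nu: "nu > 1" and J: "J \<subseteq> {1..<n}"
  shows "kappa n J g / (real nu - 1) ^ card J = (\<Sum>I\<in>Pow {1..<n}. cc nu n J I * chi nu n I g)"
proof -
  define A where "A = {1..<(n::nat)}"
  have fA: "finite A" unfolding A_def by simp
  have cA: "card A = n - 1" unfolding A_def by simp
  have r: "real nu - 1 > 0" "real nu > 0" using nu by auto
  define F where "F = (\<lambda>i b. if b then 1 / real nu else (if i \<in> J then -1 else real nu - 1) / real nu * psi nu (g i))"
  have k: "kappa n J g = (\<Prod>i\<in>A. if (g i \<noteq> 0) = (i \<in> J) then 1 else 0)"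
    unfolding prod_ind[OF fA] kappa_def using J unfolding A_def by auto
  have p: "(real nu - 1) ^ card J = (\<Prod>i\<in>A. if i \<in> J then real nu - 1 else 1)"
  proof -
    have "{i\<in>A. i \<in> J} = J" using J unfolding A_def by auto
    then show ?thesis using pow_card_prod[OF fA, of "real nu - 1" "\<lambda>i. i \<in> J"] by simp
  qed
  have "kappa n J g / (real nu - 1) ^ card J
      = (\<Prod>i\<in>A. (if (g i \<noteq> 0) = (i \<in> J) then 1 else 0) / (if i \<in> J then real nu - 1 else 1))"
    unfolding k p prod_dividef ..
  also have "\<dots> = (\<Prod>i\<in>A. F i True + F i False)"
    by (rule prod.cong) (use r in \<open>auto simp: F_def psi_def field_simps\<close>)
  also have "\<dots> = (\<Sum>I\<in>Pow A. \<Prod>i\<in>A. F i (i \<in> I))"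
    by (rule sum_pow_prod[OF fA, symmetric])
  also have "\<dots> = (\<Sum>I\<in>Pow A. cc nu n J I * chi nu n I g)"
  proof (rule sum.cong[OF refl])
    fix I assume "I \<in> Pow A"
    have e1: "{i\<in>A. i \<in> J \<and> i \<notin> I} = J - I" using J unfolding A_def by auto
    have e2: "{i\<in>A. i \<notin> I \<and> i \<notin> J} = A - (I \<union> J)" by auto
    have "(\<Prod>i\<in>A. F i (i \<in> I)) = (\<Prod>i\<in>A. (1 / real nu) * (if i \<in> J \<and> i \<notin> I then -1 else 1)
       * (if i \<notin> I \<and> i \<notin> J then real nu - 1 else 1) * (if i \<notin> I then psi nu (g i) else 1))"
      by (rule prod.cong) (auto simp: F_def)
    also have "\<dots> = (1 / real nu) ^ (n - 1) * (-1) ^ card (J - I) * (real nu - 1) ^ card (A - (I \<union> J))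
        * chi nu n I g"
      unfolding prod.distrib chi_prod A_def[symmetric] e1[symmetric] e2[symmetric] pow_card_prod[OF fA]
      by (simp add: cA)
    also have "\<dots> = cc nu n J I * chi nu n I g"
      unfolding cc_def A_def by (simp add: power_one_over)
    finally show "(\<Prod>i\<in>A. F i (i \<in> I)) = cc nu n J I * chi nu n I g" .
  qed
  finally show ?thesis unfolding A_def .
qed

lemma PiF_eq:
  assumes nu: "nu > 1" and J: "J \<subseteq> {1..<n}"
  shows "PiF nu n J = (\<lambda>beta. \<Sum>I\<in>Pow {1..<n}. cc nu n J I * Lfun n I beta)"
proof -
  define c where "c = (\<lambda>I. if I \<in> Pow {1..<n} then cc nu n J I else 0)"
  have "chcoef nu n (\<lambda>g. kappa n J g / (real nu - 1) ^ card J) = c"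
    by (rule chcoef_eq[OF nu]) (auto simp: c_def kappa_exp[OF nu J] intro!: sum.cong)
  then show ?thesis unfolding PiF_def ch_def by (auto simp: c_def intro!: sum.cong)
qed

lemma inv_inner:
  assumes nu: "nu > 1" and I: "I \<subseteq> {1..<n}" and M: "M \<subseteq> {1..<n}"
  shows "(\<Sum>K\<in>Pow {1..<n}. (-1) ^ card (K - I) * (real nu - 1) ^ card (I \<inter> K) * cc nu n K M)
     = (if M = I then 1 else 0)"
proof -
  define A where "A = {1..<(n::nat)}"
  have fA: "finite A" unfolding A_def by simp
  have cA: "card A = n - 1" unfolding A_def by simp
  define G where "G = (\<lambda>i b. if b then (if i \<in> I then real nu - 1 else -1) * (if i \<in> M then 1 else -1)
      else (if i \<in> M then 1 else real nu - 1))"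
  have "(\<Sum>K\<in>Pow A. (-1) ^ card (K - I) * (real nu - 1) ^ card (I \<inter> K) * cc nu n K M)
      = (\<Sum>K\<in>Pow A. (1 / real nu) ^ (n - 1) * (\<Prod>i\<in>A. G i (i \<in> K)))"
  proof (rule sum.cong[OF refl])
    fix K assume "K \<in> Pow A"
    hence K: "K \<subseteq> A" by auto
    have e1: "{i\<in>A. i \<in> K \<and> i \<notin> I} = K - I" using K by auto
    have e2: "{i\<in>A. i \<in> I \<and> i \<in> K} = I \<inter> K" using K by auto
    have e3: "{i\<in>A. i \<in> K \<and> i \<notin> M} = K - M" using K by auto
    have e4: "{i\<in>A. i \<notin> M \<and> i \<notin> K} = A - (M \<union> K)" by auto
    have "(\<Prod>i\<in>A. G i (i \<in> K)) = (\<Prod>i\<in>A. (if i \<in> K \<and> i \<notin> I then -1 else 1)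
        * (if i \<in> I \<and> i \<in> K then real nu - 1 else 1) * (if i \<in> K \<and> i \<notin> M then -1 else 1)
        * (if i \<notin> M \<and> i \<notin> K then real nu - 1 else 1))"
      by (rule prod.cong) (auto simp: G_def)
    also have "\<dots> = (-1) ^ card (K - I) * (real nu - 1) ^ card (I \<inter> K) * (-1) ^ card (K - M)
        * (real nu - 1) ^ card (A - (M \<union> K))"
      unfolding prod.distrib e1[symmetric] e2[symmetric] e3[symmetric] e4[symmetric] pow_card_prod[OF fA]
      ..
    finally show "(-1) ^ card (K - I) * (real nu - 1) ^ card (I \<inter> K) * cc nu n K M
       = (1 / real nu) ^ (n - 1) * (\<Prod>i\<in>A. G i (i \<in> K))"
      unfolding cc_def A_def by (simp add: power_one_over)
  qed
  also have "\<dots> = (1 / real nu) ^ (n - 1) * (\<Prod>i\<in>A. G i True + G i False)"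
    by (simp add: sum_distrib_left[symmetric] sum_pow_prod[OF fA])
  also have "\<dots> = (1 / real nu) ^ (n - 1) * (\<Prod>i\<in>A. if (i \<in> I) = (i \<in> M) then real nu else 0)"
    by (rule arg_cong[where f="\<lambda>x. _ * x"], rule prod.cong) (auto simp: G_def)
  also have "\<dots> = (if M = I then 1 else 0)"
    unfolding prod_ind[OF fA] cA using I M nu unfolding A_def by (auto simp: power_one_over)
  finally show ?thesis unfolding A_def .
qed

theorem lemma4p3:
  fixes nu n :: nat and I J :: "nat set"
  assumes "nu > 1" and "n \<ge> 1" and "I \<subseteq> {1..<n}" and "J \<subseteq> {1..<n}"
  shows "(Lfun n I = (\<lambda>beta. \<Sum>K\<in>Pow {1..<n}.
            (-1) ^ card (K - I) * (real nu - 1) ^ card (I \<inter> K) * PiF nu n K beta)) \<and>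
         (PiF nu n J = (\<lambda>beta. \<Sum>K\<in>Pow {1..<n}.
            1 / real nu ^ (n - 1) * (-1) ^ card (J - K) * (real nu - 1) ^ card ({1..<n} - (K \<union> J))
            * Lfun n K beta))"
proof
  show "PiF nu n J = (\<lambda>beta. \<Sum>K\<in>Pow {1..<n}.
            1 / real nu ^ (n - 1) * (-1) ^ card (J - K) * (real nu - 1) ^ card ({1..<n} - (K \<union> J))
            * Lfun n K beta)"
    unfolding PiF_eq[OF assms(1,4)] cc_def ..
  show "Lfun n I = (\<lambda>beta. \<Sum>K\<in>Pow {1..<n}.
            (-1) ^ card (K - I) * (real nu - 1) ^ card (I \<inter> K) * PiF nu n K beta)"
  proof
    fix beta
    have "(\<Sum>K\<in>Pow {1..<n}. (-1) ^ card (K - I) * (real nu - 1) ^ card (I \<inter> K) * PiF nu n K beta)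
      = (\<Sum>K\<in>Pow {1..<n}. \<Sum>M\<in>Pow {1..<n}. (-1) ^ card (K - I) * (real nu - 1) ^ card (I \<inter> K) * cc nu n K M * Lfun n M beta)"
      by (rule sum.cong[OF refl]) (simp add: PiF_eq[OF assms(1)] sum_distrib_left mult_ac)
    also have "\<dots> = (\<Sum>M\<in>Pow {1..<n}. (\<Sum>K\<in>Pow {1..<n}. (-1) ^ card (K - I) * (real nu - 1) ^ card (I \<inter> K) * cc nu n K M) * Lfun n M beta)"
      by (subst sum.swap) (simp add: sum_distrib_right)
    also have "\<dots> = (\<Sum>M\<in>Pow {1..<n}. if M = I then Lfun n M beta else 0)"
    proof (rule sum.cong[OF refl])
      fix M assume "M \<in> Pow {1..<n}"
      then have "M \<subseteq> {1..<n}" by auto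
      from inv_inner[OF assms(1,3) this] show "(\<Sum>K\<in>Pow {1..<n}. (-1) ^ card (K - I) * (real nu - 1) ^ card (I \<inter> K) * cc nu n K M) * Lfun n M beta = (if M = I then Lfun n M beta else 0)"
        by simp
    qed
    also have "\<dots> = Lfun n I beta" using assms(3) by simp
    finally show "Lfun n I beta = (\<Sum>K\<in>Pow {1..<n}. (-1) ^ card (K - I) * (real nu - 1) ^ card (I \<inter> K) * PiF nu n K beta)" by simp
  qed
qed

end
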